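(* Let $q$ be a prime power, $k,b,t$ positive integers and $f:\mathbb{F}_q^k\to\mathrm{Im}(f)$ a function. For any subset $\{\boldsymbol{x}_1,\ldots,\boldsymbol{x}_M\}\subseteq\mathbb{F}_q^k$, \[ r_b^f(k,t)\ge N_b\big(\boldsymbol{B}_f^{(1)}(t,\boldsymbol{x}_1,\ldots,\boldsymbol{x}_M)\big). \] Moreover, if $|\mathrm{Im}(f)|\ge 2$ and $t>b-1$, then $r_b^f(k,t)\ge 2(t-b+1)$.
   Context: For $\boldsymbol{z}=(z_0,\ldots,z_{n-1})\in\mathbb{F}_q^n$, the $b$-symbol distance of $\boldsymbol{z},\boldsymbol{w}\in\mathbb{F}_q^n$ is $d_b(\boldsymbol{z},\boldsymbol{w})=$ the number of $i\in\{0,\ldots,n-1\}$ with $(z_i,\ldots,z_{i+b-1})\neq(w_i,\ldots,w_{i+b-1})$ (indices mod $n$). A systematic encoding $\mathrm{Enc}(\boldsymbol{x})=(\boldsymbol{x},p(\boldsymbol{x}))\in\mathbb{F}_q^{k+r}$ is a function-correcting $b$-symbol code for $f$ if $d_b(\mathrm{Enc}(\boldsymbol{x}_1),\mathrm{Enc}(\boldsymbol{x}_2))\ge 2t+1$ whenever $f(\boldsymbol{x}_1)\ne f(\boldsymbol{x}_2)$; $r_b^f(k,t)$ is the smallest $r$ for which one exists. For an $M\times M$ nonnegative integer matrix $\boldsymbol{B}$, $N_b(\boldsymbol{B})$ is the smallest $r$ such that there exist $\boldsymbol{p}_1,\ldots,\boldsymbol{p}_M\in\mathbb{F}_q^r$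 (in some ordering) with $d_b(\boldsymbol{p}_i,\boldsymbol{p}_j)\ge[\boldsymbol{B}]_{ij}$ for all $i,j$. $[\boldsymbol{B}_f^{(1)}(t,\boldsymbol{x}_1,\ldots,\boldsymbol{x}_M)]_{ij}=\max\{2t-b+2-d_b(\boldsymbol{x}_i,\boldsymbol{x}_j),0\}$ if $f(\boldsymbol{x}_i)\ne f(\boldsymbol{x}_j)$ and $0$ otherwise. *)

theory Defs
  imports Main
begin

text \<open>Vectors in F_q^n are lists of length n over a finite field type 'a (q = CARD('a)).\<close>

definition vecs :: "nat \<Rightarrow> 'a list set" where
  "vecs n = {x. length x = n}"

definition bsym_dist :: "nat \<Rightarrow> 'a list \<Rightarrow> 'a list \<Rightarrow> nat" where
  "bsym_dist b z w = card {i. i < length z \<and>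
      (\<exists>j<b. z ! ((i + j) mod length z) \<noteq> w ! ((i + j) mod length z))}"

definition fc_bsym_code :: "nat \<Rightarrow> nat \<Rightarrow> nat \<Rightarrow> ('a list \<Rightarrow> 'c) \<Rightarrow> nat \<Rightarrow> ('a list \<Rightarrow> 'a list) \<Rightarrow> bool" where
  "fc_bsym_code b k t f r p \<longleftrightarrow>
     (\<forall>x\<in>vecs k. length (p x) = r) \<and>
     (\<forall>x1\<in>vecs k. \<forall>x2\<in>vecs k. f x1 \<noteq> f x2 \<longrightarrow>
        bsym_dist b (x1 @ p x1) (x2 @ p x2) \<ge> 2 * t + 1)"

definition r_bf :: "nat \<Rightarrow> ('a::{finite,field} list \<Rightarrow> 'c) \<Rightarrow> nat \<Rightarrow> nat \<Rightarrow> nat" where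
  "r_bf b f k t = (LEAST r. \<exists>p::'a list \<Rightarrow> 'a list. fc_bsym_code b k t f r p)"

text \<open>N_b(B) for an M x M matrix B (entries B i j for i,j < M), over the field 'a.\<close>
definition N_b :: "'a::{finite,field} itself \<Rightarrow> nat \<Rightarrow> nat \<Rightarrow> (nat \<Rightarrow> nat \<Rightarrow> nat) \<Rightarrow> nat" where
  "N_b _ b M B = (LEAST r. \<exists>ps :: nat \<Rightarrow> 'a list.
      (\<forall>i<M. length (ps i) = r) \<and>
      (\<forall>i<M. \<forall>j<M. bsym_dist b (ps i) (ps j) \<ge> B i j))"

text \<open>The matrix B_f^(1)(t, x_1,...,x_M), 0-indexed.\<close>
definition B1 :: "('a list \<Rightarrow> 'c) \<Rightarrow> nat \<Rightarrow> nat \<Rightarrow> 'a list list \<Rightarrow> nat \<Rightarrow> nat \<Rightarrow> nat" where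
  "B1 f b t xs i j = (if f (xs ! i) \<noteq> f (xs ! j)
      then nat (2 * int t - int b + 2 - int (bsym_dist b (xs ! i) (xs ! j))) else 0)"

end

theory Submission
  imports Defs
begin

definition dirty :: "nat \<Rightarrow> 'a list \<Rightarrow> 'a list \<Rightarrow> nat \<Rightarrow> bool" where
  "dirty b z w i \<longleftrightarrow> (\<exists>j<b. z ! ((i + j) mod length z) \<noteq> w ! ((i + j) mod length z))"

lemma bsym_dist_alt: "bsym_dist b z w = card {i. i < length z \<and> dirty b z w i}"
  unfolding bsym_dist_def dirty_def by simp

lemma key_cross:
  assumes lx: "length x = k" "length y = k" and lp: "length p = r" "length q = r"
    and m: "1 \<le> m" "m + 1 \<le> b" "m \<le> k" "m \<le> r"
    and cx: "\<not> dirty b x y (k - m)" and cp: "\<not> dirty b p q (r - m)"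
    and d1: "dirty b (x@p) (y@q) (k - m)" and d2: "dirty b (x@p) (y@q) (k + r - m)"
  shows False
proof -
  let ?n = "k + r"
  have ax: "\<And>l. l < b \<Longrightarrow> x ! ((k - m + l) mod k) = y ! ((k - m + l) mod k)"
    using cx lx unfolding dirty_def by auto
  have ap: "\<And>l. l < b \<Longrightarrow> p ! ((r - m + l) mod r) = q ! ((r - m + l) mod r)"
    using cp lp unfolding dirty_def by auto
  have catx: "\<And>i. i < k \<Longrightarrow> (x@p) ! i = x ! i \<and> (y@q) ! i = y ! i"
    using lx by (simp add: nth_append)
  have catp: "\<And>j. j < r \<Longrightarrow> (x@p) ! (k + j) = p ! j \<and> (y@q) ! (k+j) = q ! j"
    using lx by (simp add: nth_append)
  obtain l where l: "l < b" and dl: "(x@p) ! ((k - m + l) mod ?n) \<noteq> (y@q) ! ((k - m + l) mod ?n)"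
    using d1 lx lp unfolding dirty_def by auto
  obtain l' where l': "l' < b" and dl': "(x@p) ! ((k + r - m + l') mod ?n) \<noteq> (y@q) ! ((k + r - m + l') mod ?n)"
    using d2 lx lp unfolding dirty_def by auto
  have lm: "m \<le> l"
  proof (rule ccontr)
    assume "\<not> m \<le> l"
    hence lt: "k - m + l < k" using m by simp
    hence "(k - m + l) mod ?n = k - m + l" "(k - m + l) mod k = k - m + l" by simp_all
    thus False using dl ax[OF l] catx[OF lt] by simp
  qed
  have rs: "r \<le> l - m"
  proof (rule ccontr)
    assume "\<not> r \<le> l - m"
    hence lt: "l - m < r" by simp
    have "(k - m + l) mod ?n = k + (l - m)" using lm m lt by simp
    moreover have "r - m + l = r + (l - m)" using lm m by simp
    hence "(r - m + l) mod r = l - m" using lt by simp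
    ultimately show False using dl ap[OF l] catp[OF lt] by simp
  qed
  have lm': "m \<le> l'"
  proof (rule ccontr)
    assume "\<not> m \<le> l'"
    hence lt: "r - m + l' < r" using m by simp
    hence "(k + r - m + l') mod ?n = k + (r - m + l')" using m by simp
    moreover have "(r - m + l') mod r = r - m + l'" using lt by simp
    ultimately show False using dl' ap[OF l'] catp[OF lt] by simp
  qed
  have ks: "k \<le> l' - m"
  proof (rule ccontr)
    assume "\<not> k \<le> l' - m"
    hence lt: "l' - m < k" by simp
    have "k + r - m + l' = ?n + (l' - m)" "k - m + l' = k + (l' - m)" using lm' m by simp_all
    hence "(k + r - m + l') mod ?n = l' - m" "(k - m + l') mod k = l' - m" using lt by simp_all
    then show False using dl' ax[OF l'] catx[OF lt] by simp
  qed
  have allx: "\<And>i. i < k \<Longrightarrow> x ! i = y ! i"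
  proof -
    fix i assume i: "i < k"
    have "m + i < b" using i ks l' by linarith
    moreover have "(k - m + (m + i)) mod k = i" using i m by simp
    ultimately show "x ! i = y ! i" using ax[of "m+i"] by simp
  qed
  have allp: "\<And>j. j < r \<Longrightarrow> p ! j = q ! j"
  proof -
    fix j assume j: "j < r"
    have "m + j < b" using j rs l by linarith
    moreover have "(r - m + (m + j)) mod r = j" using j m by simp
    ultimately show "p ! j = q ! j" using ap[of "m+j"] by simp
  qed
  have "x = y" using allx lx by (simp add: nth_equalityI)
  moreover have "p = q" using allp lp by (simp add: nth_equalityI)
  ultimately show False using dl by simp
qed

lemma concat_bound:
  assumes lx: "length x = k" "length y = k" and lp: "length p = r" "length q = r" and b: "b > 0"
  shows "bsym_dist b (x@p) (y@q) \<le> bsym_dist b x y + bsym_dist b p q + (b - 1)"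
proof -
  let ?c = "b - 1"
  let ?n = "k + r"
  let ?X = "x@p" and ?Y = "y@q"
  define S where "S = {i. i < ?n \<and> dirty b ?X ?Y i}"
  define S1 where "S1 = {i. i < k \<and> i + ?c < k \<and> dirty b x y i}"
  define T1 where "T1 = {j. j < r \<and> j + ?c < r \<and> dirty b p q j}"
  define M1 where "M1 = {m. 1 \<le> m \<and> m \<le> ?c \<and> m \<le> k \<and> dirty b ?X ?Y (k - m)}"
  define M2 where "M2 = {m. 1 \<le> m \<and> m \<le> ?c \<and> m \<le> r \<and> dirty b ?X ?Y (?n - m)}"
  define Wx where "Wx = {m. 1 \<le> m \<and> m \<le> ?c \<and> m \<le> k \<and> dirty b x y (k - m)}"
  define Wp where "Wp = {m. 1 \<le> m \<and> m \<le> ?c \<and> m \<le> r \<and> dirty b p q (r - m)}"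
  have fin: "finite S1" "finite T1" "finite M1" "finite M2" "finite Wx" "finite Wp"
    unfolding S1_def T1_def M1_def M2_def Wx_def Wp_def by auto
  have L1a: "dirty b ?X ?Y i \<longleftrightarrow> dirty b x y i" if "i + ?c < k" for i
  proof -
    have "\<And>j. j < b \<Longrightarrow> (i + j) mod ?n = i + j \<and> (i + j) mod k = i + j \<and> i + j < k"
      using that b by auto
    thus ?thesis unfolding dirty_def using lx lp by (auto simp: nth_append)
  qed
  have L1b: "dirty b ?X ?Y (k + j) \<longleftrightarrow> dirty b p q j" if "j + ?c < r" for j
  proof -
    have "\<And>l. l < b \<Longrightarrow> (k + j + l) mod ?n = k + (j + l) \<and> (j + l) mod r = j + l \<and> j + l < r"
      using that b by auto
    thus ?thesis unfolding dirty_def using lx lp by (auto simp: nth_append add.assoc)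
  qed
  have Ssub: "S \<subseteq> S1 \<union> (\<lambda>j. k + j) ` T1 \<union> (\<lambda>m. k - m) ` M1 \<union> (\<lambda>m. ?n - m) ` M2"
  proof
    fix i assume "i \<in> S"
    hence i: "i < ?n" "dirty b ?X ?Y i" unfolding S_def by auto
    show "i \<in> S1 \<union> (\<lambda>j. k + j) ` T1 \<union> (\<lambda>m. k - m) ` M1 \<union> (\<lambda>m. ?n - m) ` M2"
    proof (cases "i < k")
      case True
      show ?thesis
      proof (cases "i + ?c < k")
        case True
        thus ?thesis using i L1a \<open>i < k\<close> unfolding S1_def by auto
      next
        case False
        hence "k - i \<in> M1" using i \<open>i < k\<close> unfolding M1_def by auto
        moreover have "i = k - (k - i)" using \<open>i < k\<close> by simp
        ultimately show ?thesis by blast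
      qed
    next
      case False
      then obtain j where j: "i = k + j" "j < r" using i by (metis add_less_cancel_left le_Suc_ex not_less)
      show ?thesis
      proof (cases "j + ?c < r")
        case True
        thus ?thesis using i L1b j unfolding T1_def by auto
      next
        case False
        hence "?n - i \<in> M2" using i j unfolding M2_def by auto
        moreover have "i = ?n - (?n - i)" using i by simp
        ultimately show ?thesis by blast
      qed
    qed
  qed
  have "card S \<le> card S1 + card ((\<lambda>j. k + j) ` T1) + card ((\<lambda>m. k - m) ` M1) + card ((\<lambda>m. ?n - m) ` M2)"
  proof -
    have "card S \<le> card (S1 \<union> (\<lambda>j. k + j) ` T1 \<union> (\<lambda>m. k - m) ` M1 \<union> (\<lambda>m. ?n - m) ` M2)"
      using Ssub fin by (intro card_mono) auto
    also have "\<dots> \<le> card (S1 \<union> (\<lambda>j. k + j) ` T1 \<union> (\<lambda>m. k - m) ` M1) + card ((\<lambda>m. ?n - m) ` M2)"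
      by (rule card_Un_le)
    also have "\<dots> \<le> card (S1 \<union> (\<lambda>j. k + j) ` T1) + card ((\<lambda>m. k - m) ` M1) + card ((\<lambda>m. ?n - m) ` M2)"
      using card_Un_le by simp
    also have "\<dots> \<le> card S1 + card ((\<lambda>j. k + j) ` T1) + card ((\<lambda>m. k - m) ` M1) + card ((\<lambda>m. ?n - m) ` M2)"
      using card_Un_le by simp
    finally show ?thesis .
  qed
  also have "\<dots> \<le> card S1 + card T1 + card M1 + card M2"
    using card_image_le fin by (intro add_mono) auto
  finally have c1: "card S \<le> card S1 + card T1 + card M1 + card M2" .
  have "M1 \<inter> M2 \<subseteq> Wx \<union> Wp"
  proof
    fix m assume "m \<in> M1 \<inter> M2"
    hence m: "1 \<le> m" "m + 1 \<le> b" "m \<le> k" "m \<le> r" "dirty b ?X ?Y (k - m)" "dirty b ?X ?Y (k + r - m)"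
      unfolding M1_def M2_def by auto
    show "m \<in> Wx \<union> Wp"
    proof (rule ccontr)
      assume "m \<notin> Wx \<union> Wp"
      hence "\<not> dirty b x y (k - m)" "\<not> dirty b p q (r - m)" using m unfolding Wx_def Wp_def by auto
      thus False using key_cross[OF lx lp m(1-4)] m(5,6) by blast
    qed
  qed
  hence "card (M1 \<inter> M2) \<le> card Wx + card Wp"
    by (meson card_Un_le card_mono fin finite_UnI le_trans)
  moreover have "card (M1 \<union> M2) \<le> ?c"
  proof -
    have "M1 \<union> M2 \<subseteq> {1..?c}" unfolding M1_def M2_def by auto
    thus ?thesis using card_mono[of "{1..?c}"] by fastforce
  qed
  ultimately have c2: "card M1 + card M2 \<le> card Wx + card Wp + ?c"
    using card_Un_Int[OF fin(3,4)] by linarith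
  have cx: "card S1 + card Wx \<le> bsym_dist b x y"
  proof -
    have inj: "inj_on (\<lambda>m. k - m) Wx" unfolding Wx_def inj_on_def by auto
    have "S1 \<union> (\<lambda>m. k - m) ` Wx \<subseteq> {i. i < length x \<and> dirty b x y i}"
      unfolding S1_def Wx_def using lx by auto
    hence "card (S1 \<union> (\<lambda>m. k - m) ` Wx) \<le> bsym_dist b x y"
      unfolding bsym_dist_alt by (intro card_mono) auto
    moreover have "S1 \<inter> (\<lambda>m. k - m) ` Wx = {}" unfolding S1_def Wx_def by auto
    ultimately show ?thesis using card_Un_disjoint[of S1 "(\<lambda>m. k - m) ` Wx"] fin card_image[OF inj] by simp
  qed
  have cp: "card T1 + card Wp \<le> bsym_dist b p q"
  proof -
    have inj: "inj_on (\<lambda>m. r - m) Wp" unfolding Wp_def inj_on_def by auto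
    have "T1 \<union> (\<lambda>m. r - m) ` Wp \<subseteq> {i. i < length p \<and> dirty b p q i}"
      unfolding T1_def Wp_def using lp by auto
    hence "card (T1 \<union> (\<lambda>m. r - m) ` Wp) \<le> bsym_dist b p q"
      unfolding bsym_dist_alt by (intro card_mono) auto
    moreover have "T1 \<inter> (\<lambda>m. r - m) ` Wp = {}" unfolding T1_def Wp_def by auto
    ultimately show ?thesis using card_Un_disjoint[of T1 "(\<lambda>m. r - m) ` Wp"] fin card_image[OF inj] by simp
  qed
  have "bsym_dist b ?X ?Y = card S" unfolding bsym_dist_alt S_def using lx lp by simp
  thus ?thesis using c1 c2 cx cp by linarith
qed

lemma bsym_dist_le_len: "bsym_dist b z w \<le> length z"
  unfolding bsym_dist_alt by (rule order_trans[OF card_mono[of "{..<length z}"]]) auto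

lemma code_exists:
  assumes k: "k > 0" and b: "b > 0"
  shows "fc_bsym_code b k t f ((2*t+1)*k) (\<lambda>x. map (\<lambda>i. x ! (i mod k)) [0..<(2*t+1)*k])"
  unfolding fc_bsym_code_def
proof (intro conjI ballI impI)
  fix x assume "x \<in> vecs k" thus "length (map (\<lambda>i. x ! (i mod k)) [0..<(2*t+1)*k]) = (2*t+1)*k" by simp
next
  fix x1 x2 assume x: "x1 \<in> vecs k" "x2 \<in> vecs k" and f: "f x1 \<noteq> f x2"
  let ?p = "\<lambda>x. map (\<lambda>i. x ! (i mod k)) [0..<(2*t+1)*k]"
  have l: "length x1 = k" "length x2 = k" using x unfolding vecs_def by auto
  have "x1 \<noteq> x2" using f by auto
  then obtain j where j: "j < k" "x1 ! j \<noteq> x2 ! j" using l nth_equalityI by metis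
  let ?g = "\<lambda>m. k + (m * k + j)"
  have inj: "inj_on ?g {..<2*t+1}" unfolding inj_on_def using j by auto
  have "?g ` {..<2*t+1} \<subseteq> {i. i < length (x1 @ ?p x1) \<and> dirty b (x1 @ ?p x1) (x2 @ ?p x2) i}"
  proof
    fix i assume "i \<in> ?g ` {..<2*t+1}"
    then obtain m where m: "m < 2*t+1" "i = ?g m" by auto
    have lt: "m * k + j < (2*t+1) * k"
    proof -
      have "m * k + j < m * k + k" using j by simp
      also have "\<dots> = (m+1) * k" by simp
      also have "\<dots> \<le> (2*t+1) * k" using m by (intro mult_right_mono) auto
      finally show ?thesis .
    qed
    have ilt: "i < length (x1 @ ?p x1)" using m lt l by simp
    have "(m * k + j) mod k = j" using j by simp
    hence "(x1 @ ?p x1) ! i \<noteq> (x2 @ ?p x2) ! i" using m lt l j by (simp add: nth_append)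
    hence "dirty b (x1 @ ?p x1) (x2 @ ?p x2) i" unfolding dirty_def using b ilt
      by (intro exI[of _ 0]) auto
    thus "i \<in> {i. i < length (x1 @ ?p x1) \<and> dirty b (x1 @ ?p x1) (x2 @ ?p x2) i}" using ilt by simp
  qed
  hence "card (?g ` {..<2*t+1}) \<le> bsym_dist b (x1 @ ?p x1) (x2 @ ?p x2)"
    unfolding bsym_dist_alt by (intro card_mono) auto
  thus "2 * t + 1 \<le> bsym_dist b (x1 @ ?p x1) (x2 @ ?p x2)" using card_image[OF inj] by simp
qed

lemma one_diff_bound:
  assumes l: "length u = k" "length v = k" and d: "\<And>i. i < k \<Longrightarrow> i \<noteq> j \<Longrightarrow> u ! i = v ! i"
  shows "bsym_dist b u v \<le> b"
proof -
  define D where "D = {i. i < length u \<and> dirty b u v i}"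
  define g where "g = (\<lambda>i. LEAST l. l < b \<and> (i + l) mod k = j)"
  have P: "g i < b \<and> (i + g i) mod k = j" if "i \<in> D" for i
  proof -
    from that obtain l where "l < b" "u ! ((i + l) mod k) \<noteq> v ! ((i + l) mod k)"
      unfolding D_def dirty_def using l by auto
    moreover have "(i + l) mod k < k" using that l unfolding D_def by auto
    ultimately have "l < b \<and> (i + l) mod k = j" using d by blast
    thus ?thesis unfolding g_def by (rule LeastI)
  qed
  have "inj_on g D"
  proof (rule inj_onI)
    fix i i' assume "i \<in> D" "i' \<in> D" "g i = g i'"
    hence "(i + g i) mod k = (i' + g i) mod k" using P by metis
    hence "i mod k = i' mod k" by (simp add: nat_mod_eq_iff)
    moreover have "i < k" "i' < k" using \<open>i \<in> D\<close> \<open>i' \<in> D\<close> l unfolding D_def by auto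
    ultimately show "i = i'" by simp
  qed
  moreover have "g ` D \<subseteq> {..<b}" using P by auto
  ultimately have "card D \<le> card {..<b}" by (meson card_inj_on_le finite_lessThan)
  thus ?thesis unfolding bsym_dist_alt D_def by simp
qed

lemma core:
  assumes c: "fc_bsym_code b k t f r p" and x: "x1 \<in> vecs k" "x2 \<in> vecs k" and f: "f x1 \<noteq> f x2"
    and b: "b > 0"
  shows "2*t+1 \<le> bsym_dist b x1 x2 + bsym_dist b (p x1) (p x2) + (b - 1)"
proof -
  have "2*t+1 \<le> bsym_dist b (x1 @ p x1) (x2 @ p x2)" using c x f unfolding fc_bsym_code_def by blast
  also have "\<dots> \<le> bsym_dist b x1 x2 + bsym_dist b (p x1) (p x2) + (b - 1)"
    using c x b unfolding fc_bsym_code_def vecs_def by (intro concat_bound) auto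
  finally show ?thesis .
qed

lemma path:
  assumes x: "x1 \<in> vecs k" "x2 \<in> vecs k" and f: "f x1 \<noteq> f x2"
  shows "\<exists>u v j. u \<in> vecs k \<and> v \<in> vecs k \<and> f u \<noteq> f v \<and> (\<forall>i<k. i \<noteq> j \<longrightarrow> u ! i = v ! i)"
proof (rule ccontr)
  assume H: "\<not> ?thesis"
  define z where "z = (\<lambda>j. map (\<lambda>i. if i < j then x2 ! i else x1 ! i) [0..<k])"
  have zv: "z j \<in> vecs k" for j unfolding z_def vecs_def by simp
  have step: "f (z j) = f (z (Suc j))" for j
  proof -
    have "\<forall>i<k. i \<noteq> j \<longrightarrow> z j ! i = z (Suc j) ! i" unfolding z_def by auto
    thus ?thesis using H zv by blast
  qed
  have all: "f (z j) = f (z 0)" for j by (induction j) (use step in auto)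
  have l: "length x1 = k" "length x2 = k" using x unfolding vecs_def by auto
  have "z 0 = x1" unfolding z_def using l by (intro nth_equalityI) auto
  moreover have "z k = x2" unfolding z_def using l by (intro nth_equalityI) auto
  ultimately show False using all[of k] f by simp
qed

theorem corollary3p3:
  fixes f :: "'a::{finite,field} list \<Rightarrow> 'c"
    and k b t :: nat and xs :: "'a list list"
  assumes "k > 0" "b > 0" "t > 0"
    and "distinct xs" "set xs \<subseteq> vecs k"
  shows "r_bf b f k t \<ge> N_b TYPE('a) b (length xs) (B1 f b t xs) \<and>
         (card (f ` vecs k) \<ge> 2 \<and> t > b - 1 \<longrightarrow> r_bf b f k t \<ge> 2 * (t - b + 1))"
proof -
  have "\<exists>r. \<exists>p::'a list \<Rightarrow> 'a list. fc_bsym_code b k t f r p"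
    using code_exists[OF assms(1,2)] by blast
  hence "\<exists>p::'a list \<Rightarrow> 'a list. fc_bsym_code b k t f (r_bf b f k t) p"
    unfolding r_bf_def by (rule LeastI_ex)
  then obtain p :: "'a list \<Rightarrow> 'a list" where c: "fc_bsym_code b k t f (r_bf b f k t) p" by blast
  have xsv: "\<And>i. i < length xs \<Longrightarrow> xs ! i \<in> vecs k" using assms(5) nth_mem by blast
  have part1: "N_b TYPE('a) b (length xs) (B1 f b t xs) \<le> r_bf b f k t"
    unfolding N_b_def
  proof (rule Least_le, rule exI[of _ "\<lambda>i. p (xs ! i)"], intro conjI allI impI)
    fix i assume "i < length xs"
    thus "length (p (xs ! i)) = r_bf b f k t" using c xsv unfolding fc_bsym_code_def by blast
  next
    fix i j assume ij: "i < length xs" "j < length xs"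
    show "B1 f b t xs i j \<le> bsym_dist b (p (xs ! i)) (p (xs ! j))"
    proof (cases "f (xs ! i) \<noteq> f (xs ! j)")
      case True
      have "2*t+1 \<le> bsym_dist b (xs!i) (xs!j) + bsym_dist b (p (xs!i)) (p (xs!j)) + (b - 1)"
        using core[OF c xsv[OF ij(1)] xsv[OF ij(2)] True assms(2)] .
      thus ?thesis using True assms(2) unfolding B1_def by simp
    next
      case False
      thus ?thesis unfolding B1_def by simp
    qed
  qed
  have part2: "r_bf b f k t \<ge> 2 * (t - b + 1)" if h: "card (f ` vecs k) \<ge> 2" "t > b - 1"
  proof -
    obtain y1 y2 where "y1 \<in> f ` vecs k" "y2 \<in> f ` vecs k" "y1 \<noteq> y2"
    proof -
      have fin: "finite (f ` vecs k)" using h(1) by (intro card_ge_0_finite) linarith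
      have "\<not> card (f ` vecs k) \<le> Suc 0" using h(1) by simp
      thus ?thesis using that card_le_Suc0_iff_eq[OF fin] by blast
    qed
    then obtain x1 x2 where x: "x1 \<in> vecs k" "x2 \<in> vecs k" "f x1 \<noteq> f x2" by blast
    then obtain u v j where uv: "u \<in> vecs k" "v \<in> vecs k" "f u \<noteq> f v"
        "\<forall>i<k. i \<noteq> j \<longrightarrow> u ! i = v ! i" using path[OF x] by blast
    have "bsym_dist b u v \<le> b" using uv unfolding vecs_def by (intro one_diff_bound) auto
    moreover have "2*t+1 \<le> bsym_dist b u v + bsym_dist b (p u) (p v) + (b - 1)"
      using core[OF c uv(1-3) assms(2)] .
    moreover have "bsym_dist b (p u) (p v) \<le> r_bf b f k t"
      proof -
      have "length (p u) = r_bf b f k t" using c uv(1) unfolding fc_bsym_code_def by blast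
      thus ?thesis using bsym_dist_le_len[of b "p u" "p v"] by simp
    qed
    ultimately show ?thesis using h(2) assms(2) by presburger
  qed
  show ?thesis using part1 part2 by blast
qed

end
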